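(* Let $\{\vec S_n\}_{n=1}^6$ (indices modulo $6$) be an oriented, augmented right-angled hexagon in $\mathbb H^4$. For $n=1,\dots,6$ let $\tau_n$ be the unique orientation-preserving isometry of $\mathbb H^4$ with $\tau_n(\vec S_n)=\vec S_n$ and $\tau_n(\vec S_{n-1})=\vec S_{n+1}$; set $\iota_n=(\tau_n\cdots\tau_2\tau_1)^{-1}$ (with $\iota_0=\mathrm{id}$) and $\eta_n=\iota_{n-1}\tau_n\iota_{n-1}^{-1}$. Then (1) $\tau_6\tau_5\cdots\tau_1=\mathrm{id}$; (2) $\eta_1\eta_2\cdots\eta_6=\mathrm{id}$; (3) for $n=1,3,5$: $\iota_n(\vec S_n)=\vec S_1$ and $\iota_n(\vec S_{n+1})=\vec S_6$; (4) for $n=2,4,6$: $\iota_n(\vec S_n)=\vec S_6$ and $\iota_n(\vec S_{n+1})=\vec S_1$.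
   Context: $\mathbb H^4$ is hyperbolic 4-space (oriented). Lines and planes are complete totally geodesic submanifolds of dimension 1 and 2. A flag is a pair $(L,\Pi)$ of a line $L$ contained in a plane $\Pi$; an oriented flag has both $L$ and $\Pi$ oriented. Two lines are orthogonal if they meet perpendicularly; a line $L'$ and a flag $(L,\Pi)$ are orthogonal if $L'$ meets $L$ and is perpendicular to $\Pi$. An augmented right-angled hexagon in $\mathbb H^4$ is a cyclic six-tuple $\{S_n\}_{n=1}^6$ where either $S_1,S_3,S_5$ are lines and $S_2,S_4,S_6$ flags, or vice versa, such that $S_n$ and $S_{n+1}$ are orthogonal for all $n$; it is oriented if each $S_n$ is oriented. For an oriented flag and an oriented line orthogonal to each other, there is a unique orientation-preserving isometry of $\mathbb H^4$ sending this pair to any other such pair (so each $\tau_n$ exists and is unique). *)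

theory Defs
  imports "HOL-Analysis.Analysis" "HOL-Library.Numeral_Type"
begin

text \<open>Hyperboloid model of hyperbolic 4-space inside Minkowski space R^(4,1).
  Coordinate 0 is the time-like one.\<close>

type_synonym vec = "real^5"
type_synonym mat5 = "real^5^5"

definition mink :: "vec \<Rightarrow> vec \<Rightarrow> real" where
  "mink x y = (\<Sum>i\<in>UNIV. (if i = 0 then -1 else 1) * (x $ i) * (y $ i))"

definition H4 :: "vec set" where
  "H4 = {x. mink x x = -1 \<and> x $ 0 > 0}"

definition is_or_isom :: "mat5 \<Rightarrow> bool" where
  "is_or_isom A \<longleftrightarrow> (\<forall>x y. mink (A *v x) (A *v y) = mink x y) \<and>
     (\<forall>x\<in>H4. A *v x \<in> H4) \<and> det A > 0"

definition rows5 :: "vec \<Rightarrow> vec \<Rightarrow> vec \<Rightarrow> vec \<Rightarrow> vec \<Rightarrow> mat5" where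
  "rows5 a b c d e = (\<chi> i. if i = 0 then a else if i = 1 then b else if i = 2 then c
                           else if i = 3 then d else e)"

text \<open>An oriented k-dimensional totally geodesic subspace of H^4 is represented by an
  oriented (k+1)-dimensional linear subspace of R^(4,1) meeting H4, given by an ordered basis.\<close>
type_synonym oline = "vec \<times> vec"
type_synonym oplane = "vec \<times> vec \<times> vec"

definition lspan :: "oline \<Rightarrow> vec set" where
  "lspan L = span {fst L, snd L}"

definition pspan :: "oplane \<Rightarrow> vec set" where
  "pspan P = (case P of (a, b, c) \<Rightarrow> span {a, b, c})"

definition is_oline :: "oline \<Rightarrow> bool" where
  "is_oline L \<longleftrightarrow> (case L of (a, b) \<Rightarrow> dim {a, b} = 2) \<and> lspan L \<inter> H4 \<noteq> {}"

definition is_oplane :: "oplane \<Rightarrow> bool" where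
  "is_oplane P \<longleftrightarrow> (case P of (a, b, c) \<Rightarrow> dim {a, b, c} = 3) \<and> pspan P \<inter> H4 \<noteq> {}"

text \<open>Two ordered bases define the same oriented subspace iff they span the same subspace
  and the change of basis has positive determinant (tested by completing to a basis of R^5).\<close>
definition same_oline :: "oline \<Rightarrow> oline \<Rightarrow> bool" where
  "same_oline L L' \<longleftrightarrow> is_oline L \<and> is_oline L' \<and> lspan L = lspan L' \<and>
     (\<exists>w1 w2 w3. det (rows5 (fst L) (snd L) w1 w2 w3) * det (rows5 (fst L') (snd L') w1 w2 w3) > 0)"

definition same_oplane :: "oplane \<Rightarrow> oplane \<Rightarrow> bool" where
  "same_oplane P P' \<longleftrightarrow> is_oplane P \<and> is_oplane P' \<and> pspan P = pspan P' \<and>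
     (case P of (a, b, c) \<Rightarrow> case P' of (a', b', c') \<Rightarrow>
        (\<exists>w1 w2. det (rows5 a b c w1 w2) * det (rows5 a' b' c' w1 w2) > 0))"

datatype hobj = HLine oline | HFlag oline oplane

fun wf_hobj :: "hobj \<Rightarrow> bool" where
  "wf_hobj (HLine L) = is_oline L"
| "wf_hobj (HFlag L P) = (is_oline L \<and> is_oplane P \<and> lspan L \<subseteq> pspan P)"

fun is_line :: "hobj \<Rightarrow> bool" where
  "is_line (HLine _) = True"
| "is_line (HFlag _ _) = False"

fun is_flag :: "hobj \<Rightarrow> bool" where
  "is_flag (HLine _) = False"
| "is_flag (HFlag _ _) = True"

fun heq :: "hobj \<Rightarrow> hobj \<Rightarrow> bool" where
  "heq (HLine L) (HLine L') = same_oline L L'"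
| "heq (HFlag L P) (HFlag L' P') = (same_oline L L' \<and> same_oplane P P')"
| "heq _ _ = False"

fun act :: "mat5 \<Rightarrow> hobj \<Rightarrow> hobj" where
  "act A (HLine (a, b)) = HLine (A *v a, A *v b)"
| "act A (HFlag (a, b) (c, d, e)) = HFlag (A *v a, A *v b) (A *v c, A *v d, A *v e)"

definition orth_lf :: "oline \<Rightarrow> oline \<Rightarrow> oplane \<Rightarrow> bool" where
  "orth_lf L' L P \<longleftrightarrow> (\<exists>p u. p \<in> H4 \<and> p \<in> lspan L \<and> u \<noteq> 0 \<and> mink p u = 0 \<and>
      lspan L' = span {p, u} \<and> (\<forall>w\<in>pspan P. mink u w = 0))"

fun orth :: "hobj \<Rightarrow> hobj \<Rightarrow> bool" where
  "orth (HLine L') (HFlag L P) = orth_lf L' L P"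
| "orth (HFlag L P) (HLine L') = orth_lf L' L P"
| "orth _ _ = False"

definition nxt :: "nat \<Rightarrow> nat" where "nxt n = (if n = 6 then 1 else n + 1)"
definition prv :: "nat \<Rightarrow> nat" where "prv n = (if n = 1 then 6 else n - 1)"

definition oriented_aug_hexagon :: "(nat \<Rightarrow> hobj) \<Rightarrow> bool" where
  "oriented_aug_hexagon S \<longleftrightarrow> (\<forall>n\<in>{1..6}. wf_hobj (S n)) \<and>
     ((\<forall>n\<in>{1,3,5}. is_line (S n)) \<and> (\<forall>n\<in>{2,4,6}. is_flag (S n)) \<or>
      (\<forall>n\<in>{1,3,5}. is_flag (S n)) \<and> (\<forall>n\<in>{2,4,6}. is_line (S n))) \<and>
     (\<forall>n\<in>{1..6}. orth (S n) (S (nxt n)))"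

fun compo :: "(nat \<Rightarrow> mat5) \<Rightarrow> nat \<Rightarrow> mat5" where
  "compo \<tau> 0 = mat 1"
| "compo \<tau> (Suc n) = \<tau> (Suc n) ** compo \<tau> n"

definition iota :: "(nat \<Rightarrow> mat5) \<Rightarrow> nat \<Rightarrow> mat5" where
  "iota \<tau> n = matrix_inv (compo \<tau> n)"

definition eta :: "(nat \<Rightarrow> mat5) \<Rightarrow> nat \<Rightarrow> mat5" where
  "eta \<tau> n = iota \<tau> (n - 1) ** \<tau> n ** matrix_inv (iota \<tau> (n - 1))"

end

theory Submission
  imports Defs
begin


lemma exhaust_5:
  fixes x :: 5
  shows "x = 0 \<or> x = 1 \<or> x = 2 \<or> x = 3 \<or> x = 4"
proof (induct x)
  case (of_int z)
  then have "z = 0 \<or> z = 1 \<or> z = 2 \<or> z = 3 \<or> z = 4" by fastforce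
  then show ?case by auto
qed

lemma UNIV_5: "(UNIV::5 set) = {0,1,2,3,4}"
  using exhaust_5 by auto

lemma mink_expand: "mink x y = -(x$0*y$0) + x$1*y$1 + x$2*y$2 + x$3*y$3 + x$4*y$4"
  unfolding mink_def UNIV_5 by (simp add: algebra_simps)



lemma mink_sym: "mink x y = mink y x" by (simp add: mink_expand algebra_simps)
lemma mink_add_left: "mink (x+y) z = mink x z + mink y z" by (simp add: mink_expand algebra_simps)
lemma mink_add_right: "mink z (x+y) = mink z x + mink z y" by (simp add: mink_expand algebra_simps)
lemma mink_diff_left: "mink (x-y) z = mink x z - mink y z" by (simp add: mink_expand algebra_simps)
lemma mink_diff_right: "mink z (x-y) = mink z x - mink z y" by (simp add: mink_expand algebra_simps)
lemma mink_scale_left: "mink (c *\<^sub>R x) z = c * mink x z" by (simp add: mink_expand algebra_simps)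
lemma mink_scale_right: "mink z (c *\<^sub>R x) = c * mink z x" by (simp add: mink_expand algebra_simps)
lemma mink_neg_left: "mink (-x) z = - mink x z" by (simp add: mink_expand algebra_simps)
lemma mink_neg_right: "mink z (-x) = - mink z x" by (simp add: mink_expand algebra_simps)
lemma mink_zero_left: "mink 0 z = 0" by (simp add: mink_expand)
lemma mink_zero_right: "mink z 0 = 0" by (simp add: mink_expand)

lemmas mink_simps = mink_add_left mink_add_right mink_diff_left mink_diff_right
  mink_scale_left mink_scale_right mink_neg_left mink_neg_right mink_zero_left mink_zero_right

lemma mink_span_zero:
  assumes "x \<in> span S" "\<forall>s\<in>S. mink u s = 0" shows "mink u x = 0"
proof -
  have "subspace {x. mink u x = 0}" by (auto simp: subspace_def mink_simps)
  then show ?thesis using assms span_induct[of x S "\<lambda>x. mink u x = 0"] by auto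
qed

lemma vec5_eq0: "(v::vec) = 0 \<longleftrightarrow> v$0 = 0 \<and> v$1 = 0 \<and> v$2 = 0 \<and> v$3 = 0 \<and> v$4 = 0"
proof
  assume "v = 0" then show "v$0 = 0 \<and> v$1 = 0 \<and> v$2 = 0 \<and> v$3 = 0 \<and> v$4 = 0" by simp
next
  assume h: "v$0 = 0 \<and> v$1 = 0 \<and> v$2 = 0 \<and> v$3 = 0 \<and> v$4 = 0"
  show "v = 0"
  proof (rule vec_eq_iff[THEN iffD2, rule_format])
    fix i show "v$i = 0$i" using exhaust_5[of i] h by auto
  qed
qed

lemma H4_comp: "p \<in> H4 \<Longrightarrow> p$0 > 0 \<and> (p$0)^2 = 1 + (p$1)^2 + (p$2)^2 + (p$3)^2 + (p$4)^2"
  unfolding H4_def by (auto simp: mink_expand power2_eq_square)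

lemma spacelike:
  assumes p: "p \<in> H4" and pv: "mink p v = 0" and v: "v \<noteq> 0"
  shows "mink v v > 0"
proof -
  define p0 where "p0 = p$0"
  define p1 where "p1 = p$1"
  define p2 where "p2 = p$2"
  define p3 where "p3 = p$3"
  define p4 where "p4 = p$4"
  define v0 where "v0 = v$0"
  define v1 where "v1 = v$1"
  define v2 where "v2 = v$2"
  define v3 where "v3 = v$3"
  define v4 where "v4 = v$4"
  define P where "P = p1^2+p2^2+p3^2+p4^2"
  define V where "V = v1^2+v2^2+v3^2+v4^2"
  define Q where "Q = p1* v1+p2* v2+p3* v3+p4* v4"
  have h1: "p0 > 0" "p0^2 = 1 + P" using H4_comp[OF p] by (auto simp: p0_def p1_def p2_def p3_def p4_def P_def)
  have h2: "p0* v0 = Q" using pv by (simp add: mink_expand p0_def p1_def p2_def p3_def p4_def v0_def v1_def v2_def v3_def v4_def Q_def)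
  have mv: "mink v v = V - v0^2" by (simp add: mink_expand V_def v0_def v1_def v2_def v3_def v4_def power2_eq_square)
  have lag: "P*V - Q^2 = (p1* v2-p2* v1)^2+(p1* v3-p3* v1)^2+(p1* v4-p4* v1)^2+(p2* v3-p3* v2)^2+(p2* v4-p4* v2)^2+(p3* v4-p4* v3)^2"
    unfolding P_def V_def Q_def by algebra
  have "Q^2 \<le> P*V" using lag by (metis diff_ge_0_iff_ge sum_power2_ge_zero zero_le_power2 add_nonneg_nonneg)
  show ?thesis
  proof (cases "V = 0")
    case True
    have "v1^2 = 0 \<and> v2^2 = 0 \<and> v3^2 = 0 \<and> v4^2 = 0" using True
      zero_le_power2[of v1] zero_le_power2[of v2] zero_le_power2[of v3] zero_le_power2[of v4]
      unfolding V_def by linarith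
    then have "v1 = 0 \<and> v2 = 0 \<and> v3 = 0 \<and> v4 = 0" by simp
    then have "Q = 0" by (simp add: Q_def)
    then have "v0 = 0" using h1 h2 by simp
    then show ?thesis using v \<open>v1 = 0 \<and> v2 = 0 \<and> v3 = 0 \<and> v4 = 0\<close>
      by (simp add: vec5_eq0 v0_def v1_def v2_def v3_def v4_def)
  next
    case False
    have "V \<ge> 0" unfolding V_def by simp
    then have Vp: "V > 0" using False by simp
    have e1: "(p0* v0)^2 = p0^2 * v0^2" by (simp add: power_mult_distrib)
    have e2: "P = p0^2 - 1" using h1 by simp
    have "p0^2 * v0^2 \<le> (p0^2 - 1) * V" using \<open>Q^2 \<le> P*V\<close> e1 e2 h2 by simp
    then have "p0^2 * (v0^2 - V) \<le> - V" by (simp add: algebra_simps)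
    then have "p0^2 * (v0^2 - V) < 0" using Vp by linarith
    moreover have "P \<ge> 0" unfolding P_def by simp
    ultimately have "v0^2 - V < 0" using h1 by (auto simp add: mult_less_0_iff)
    then show ?thesis using mv by simp
  qed
qed

lemma nonspacelike_unit:
  assumes p: "p \<in> H4" and "mink (c *\<^sub>R p) (c *\<^sub>R p) = -1" and "(c *\<^sub>R p)$0 > 0"
  shows "c = 1"
proof -
  have "mink p p = -1" using p by (simp add: H4_def)
  then have "c*c = 1" using assms(2) by (simp add: mink_simps)
  moreover have "c > 0" using assms(3) H4_comp[OF p] by (simp add: zero_less_mult_iff)
  ultimately show ?thesis by (metis mult_cancel_left1 mult_cancel_right1 mult_less_cancel_left_pos mult_less_cancel_right2 not_less_iff_gr_or_eq)
qed

lemma inv_facts: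
  assumes "invertible (A::mat5)" shows "A ** matrix_inv A = mat 1" "matrix_inv A ** A = mat 1"
proof -
  have "\<exists>A'. A ** A' = mat 1 \<and> A' ** A = mat 1" using assms by (simp add: invertible_def)
  then have "A ** matrix_inv A = mat 1 \<and> matrix_inv A ** A = mat 1"
    unfolding matrix_inv_def by (rule someI_ex)
  then show "A ** matrix_inv A = mat 1" "matrix_inv A ** A = mat 1" by auto
qed

lemma isom_invertible: "is_or_isom A \<Longrightarrow> invertible A"
  by (simp add: is_or_isom_def invertible_det_nz)

lemma isom_id: "is_or_isom (mat 1)"
  unfolding is_or_isom_def by simp

lemma isom_mult: assumes "is_or_isom A" "is_or_isom B" shows "is_or_isom (A ** B)"
  using assms unfolding is_or_isom_def
  by (simp add: matrix_vector_mul_assoc[symmetric] det_mul)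

lemma H4_neg: "x \<in> H4 \<Longrightarrow> -x \<notin> H4" by (simp add: H4_def)

lemma isom_inv: assumes A: "is_or_isom A" shows "is_or_isom (matrix_inv A)"
proof -
  have inv: "A ** matrix_inv A = mat 1" "matrix_inv A ** A = mat 1"
    using inv_facts[OF isom_invertible[OF A]] by auto
  have AB: "\<And>x. A *v (matrix_inv A *v x) = x" by (simp add: matrix_vector_mul_assoc inv)
  have m: "mink (matrix_inv A *v x) (matrix_inv A *v y) = mink x y" for x y
    using A unfolding is_or_isom_def by (metis AB)
  have "det A * det (matrix_inv A) = 1" by (metis det_I det_mul inv(1))
  moreover have "det A > 0" using A unfolding is_or_isom_def by auto
  ultimately have d: "det (matrix_inv A) > 0"
    by (metis mult_pos_pos zero_less_mult_pos zero_less_one)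
  have h: "matrix_inv A *v x \<in> H4" if x: "x \<in> H4" for x
  proof -
    define y where "y = matrix_inv A *v x"
    have my: "mink y y = -1" using m[of x x] x by (simp add: y_def H4_def)
    have "y$0 \<noteq> 0"
    proof
      assume "y$0 = 0"
      then have "mink y y \<ge> 0" by (simp add: mink_expand)
      then show False using my by simp
    qed
    moreover have "\<not> y$0 < 0"
    proof
      assume "y$0 < 0"
      then have "-y \<in> H4" using my by (simp add: H4_def mink_simps)
      then have "A *v (-y) \<in> H4" using A unfolding is_or_isom_def by blast
      moreover have "A *v (-y) = - (A *v y)" by (simp add: vec_eq_iff matrix_vector_mult_def sum_negf)
      ultimately have "-x \<in> H4" using AB by (simp add: y_def)
      then show False using H4_neg x by auto
    qed
    ultimately show ?thesis using my by (auto simp: H4_def y_def)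
  qed
  show ?thesis unfolding is_or_isom_def using m d h by blast
qed



lemma r5_0: "rows5 z b c d e = (\<chi> i. if i = 0 then z else rows5 0 b c d e $ i)"
  by (simp add: rows5_def vec_eq_iff)
lemma r5_1: "rows5 a z c d e = (\<chi> i. if i = 1 then z else rows5 a 0 c d e $ i)"
  by (simp add: rows5_def vec_eq_iff)
lemma r5_2: "rows5 a b z d e = (\<chi> i. if i = 2 then z else rows5 a b 0 d e $ i)"
  by (simp add: rows5_def vec_eq_iff)

lemma det5_add0: "det (rows5 (x+y) b c d e) = det (rows5 x b c d e) + det (rows5 y b c d e)"
  using det_row_add[where k=0 and a="\<lambda>_. x" and b="\<lambda>_. y" and c="\<lambda>i. rows5 0 b c d e $ i"]
  by (metis r5_0)
lemma det5_add1: "det (rows5 a (x+y) c d e) = det (rows5 a x c d e) + det (rows5 a y c d e)"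
  using det_row_add[where k=1 and a="\<lambda>_. x" and b="\<lambda>_. y" and c="\<lambda>i. rows5 a 0 c d e $ i"]
  by (metis r5_1)
lemma det5_add2: "det (rows5 a b (x+y) d e) = det (rows5 a b x d e) + det (rows5 a b y d e)"
  using det_row_add[where k=2 and a="\<lambda>_. x" and b="\<lambda>_. y" and c="\<lambda>i. rows5 a b 0 d e $ i"]
  by (metis r5_2)
lemma det5_mul0: "det (rows5 (k *\<^sub>R x) b c d e) = k * det (rows5 x b c d e)"
  using det_row_mul[where k=0 and c=k and a="\<lambda>_. x" and b="\<lambda>i. rows5 0 b c d e $ i"]
  by (metis r5_0 scalar_mult_eq_scaleR)
lemma det5_mul1: "det (rows5 a (k *\<^sub>R x) c d e) = k * det (rows5 a x c d e)"
  using det_row_mul[where k=1 and c=k and a="\<lambda>_. x" and b="\<lambda>i. rows5 a 0 c d e $ i"]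
  by (metis r5_1 scalar_mult_eq_scaleR)
lemma det5_mul2: "det (rows5 a b (k *\<^sub>R x) d e) = k * det (rows5 a b x d e)"
  using det_row_mul[where k=2 and c=k and a="\<lambda>_. x" and b="\<lambda>i. rows5 a b 0 d e $ i"]
  by (metis r5_2 scalar_mult_eq_scaleR)

lemma det5_id01: "det (rows5 u u c d e) = 0"
  by (rule det_identical_rows[of 0 1]) (auto simp: rows5_def row_def vec_eq_iff)
lemma det5_id02: "det (rows5 u b u d e) = 0"
  by (rule det_identical_rows[of 0 2]) (auto simp: rows5_def row_def vec_eq_iff)
lemma det5_id12: "det (rows5 a u u d e) = 0"
  by (rule det_identical_rows[of 1 2]) (auto simp: rows5_def row_def vec_eq_iff)

lemmas det5_lin = det5_add0 det5_add1 det5_add2 det5_mul0 det5_mul1 det5_mul2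
  det5_id01 det5_id02 det5_id12

lemma det5_sw01: "det (rows5 y x c d e) = - det (rows5 x y c d e)"
proof -
  have "det (rows5 (x+y) (x+y) c d e) = (det (rows5 x x c d e) + det (rows5 x y c d e)) + (det (rows5 y x c d e) + det (rows5 y y c d e))" by (simp only: det5_add0 det5_add1 det5_add2)
  then show ?thesis using det5_id01[of "x+y" c d e] det5_id01[of x c d e] det5_id01[of y c d e] by linarith
qed
lemma det5_sw02: "det (rows5 z b x d e) = - det (rows5 x b z d e)"
proof -
  have "det (rows5 (x+z) b (x+z) d e) = (det (rows5 x b x d e) + det (rows5 x b z d e)) + (det (rows5 z b x d e) + det (rows5 z b z d e))" by (simp only: det5_add0 det5_add1 det5_add2)
  then show ?thesis using det5_id02[of "x+z" b d e] det5_id02[of x b d e] det5_id02[of z b d e] by linarith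
qed
lemma det5_sw12: "det (rows5 a z y d e) = - det (rows5 a y z d e)"
proof -
  have "det (rows5 a (y+z) (y+z) d e) = (det (rows5 a y y d e) + det (rows5 a y z d e)) + (det (rows5 a z y d e) + det (rows5 a z z d e))" by (simp only: det5_add0 det5_add1 det5_add2)
  then show ?thesis using det5_id12[of a "y+z" d e] det5_id12[of a y d e] det5_id12[of a z d e] by linarith
qed

lemma det5_2: "det (rows5 (a1 *\<^sub>R x + a2 *\<^sub>R y) (b1 *\<^sub>R x + b2 *\<^sub>R y) c d e)
   = (a1*b2 - a2*b1) * det (rows5 x y c d e)"
  using det5_sw01[of y x c d e]
  apply (simp only: det5_add0 det5_add1 det5_mul0 det5_mul1)
  apply (simp only: det5_id01 mult_zero_right mult_zero_left add_0_left add_0_right)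
  by (simp add: algebra_simps)

lemma det5_3: "det (rows5 (a1 *\<^sub>R x + a2 *\<^sub>R y + a3 *\<^sub>R z) (b1 *\<^sub>R x + b2 *\<^sub>R y + b3 *\<^sub>R z)
     (c1 *\<^sub>R x + c2 *\<^sub>R y + c3 *\<^sub>R z) d e)
   = (a1*(b2*c3 - b3*c2) - a2*(b1*c3 - b3*c1) + a3*(b1*c2 - b2*c1)) * det (rows5 x y z d e)"
proof -
  obtain D where D: "det (rows5 x y z d e) = D" by blast
  have s1: "det (rows5 y x z d e) = - D" using det5_sw01 D by metis
  have s2: "det (rows5 x z y d e) = - D" using det5_sw12 D by metis
  have s3: "det (rows5 z y x d e) = - D" using det5_sw02 D by metis
  have s4: "det (rows5 y z x d e) = D"
    using det5_sw01[of z y x d e] s3 by simp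
  have s5: "det (rows5 z x y d e) = D"
    using det5_sw01[of x z y d e] s2 by simp
  show ?thesis
    apply (simp only: det5_add0 det5_add1 det5_add2 det5_mul0 det5_mul1 det5_mul2)
    apply (simp only: det5_id01 det5_id02 det5_id12 D s1 s2 s3 s4 s5 mult_zero_right mult_zero_left add_0_left add_0_right)
    apply algebra
    done
qed

lemma span2_coeffs: assumes "(u::vec) \<in> span {x, y}" shows "\<exists>a b. u = a *\<^sub>R x + b *\<^sub>R y"
proof -
  obtain k where "u - k *\<^sub>R x \<in> span {y}" using assms by (auto simp: span_insert)
  then obtain c where "u - k *\<^sub>R x = c *\<^sub>R y" by (auto simp: span_singleton)
  then have "u = k *\<^sub>R x + c *\<^sub>R y" by (simp add: algebra_simps)
  then show ?thesis by blast
qed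

lemma span3_coeffs: assumes "(u::vec) \<in> span {x, y, z}" shows "\<exists>a b c. u = a *\<^sub>R x + b *\<^sub>R y + c *\<^sub>R z"
proof -
  obtain k where "u - k *\<^sub>R x \<in> span {y, z}" using assms by (auto simp: span_insert[of x])
  then obtain b c where "u - k *\<^sub>R x = b *\<^sub>R y + c *\<^sub>R z" using span2_coeffs by blast
  then have "u = k *\<^sub>R x + b *\<^sub>R y + c *\<^sub>R z" by (simp add: algebra_simps)
  then show ?thesis by blast
qed



lemma mult_transpose_row: "((R::mat5) ** transpose A) $ i = A *v (R $ i)"
  by (simp add: vec_eq_iff matrix_matrix_mult_def matrix_vector_mult_def transpose_def mult.commute)

lemma rows5_act: "rows5 (A *v a) (A *v b) (A *v c) (A *v d) (A *v e) = rows5 a b c d e ** transpose A"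
proof -
  have "(rows5 (A *v a) (A *v b) (A *v c) (A *v d) (A *v e)) $ i = (rows5 a b c d e ** transpose A) $ i" for i
    unfolding mult_transpose_row using exhaust_5[of i] by (elim disjE) (simp_all add: rows5_def)
  then show ?thesis by (rule vec_eq_iff[THEN iffD2, OF allI])
qed

lemma det_rows5_act: "det (rows5 (A *v a) (A *v b) (A *v c) (A *v d) (A *v e)) = det (rows5 a b c d e) * det A"
  by (simp add: rows5_act det_mul)



lemma oline_ratio: assumes "span {a', b'} = span {a, b::vec}"
  shows "\<exists>k. \<forall>w1 w2 w3. det (rows5 a' b' w1 w2 w3) = k * det (rows5 a b w1 w2 w3)"
proof -
  have "a' \<in> span {a,b}" "b' \<in> span {a,b}" using assms span_base[of _ "{a',b'}"] by auto
  then obtain a1 a2 b1 b2 where "a' = a1 *\<^sub>R a + a2 *\<^sub>R b" "b' = b1 *\<^sub>R a + b2 *\<^sub>R b"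
    using span2_coeffs by metis
  then show ?thesis by (intro exI[of _ "a1*b2 - a2*b1"] allI) (simp add: det5_2)
qed

lemma oplane_ratio: assumes "span {a', b', c'} = span {a, b, c::vec}"
  shows "\<exists>k. \<forall>w1 w2. det (rows5 a' b' c' w1 w2) = k * det (rows5 a b c w1 w2)"
proof -
  have "a' \<in> span {a,b,c}" "b' \<in> span {a,b,c}" "c' \<in> span {a,b,c}"
    using assms span_base[of _ "{a',b',c'}"] by auto
  then obtain a1 a2 a3 b1 b2 b3 c1 c2 c3 where "a' = a1 *\<^sub>R a + a2 *\<^sub>R b + a3 *\<^sub>R c"
     "b' = b1 *\<^sub>R a + b2 *\<^sub>R b + b3 *\<^sub>R c" "c' = c1 *\<^sub>R a + c2 *\<^sub>R b + c3 *\<^sub>R c"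
    using span3_coeffs by metis
  then show ?thesis by (intro exI[of _ "a1*(b2*c3 - b3*c2) - a2*(b1*c3 - b3*c1) + a3*(b1*c2 - b2*c1)"] allI) (simp only: det5_3)
qed

lemma pos_ratio: assumes "\<forall>w. f' w = k * f w" "f' w0 * f w0 > (0::real)"
  shows "k > 0" "f w0 \<noteq> 0"
proof -
  have "k * (f w0 * f w0) > 0" using assms by (simp add: algebra_simps)
  moreover have "f w0 * f w0 \<ge> 0" by simp
  ultimately show "k > 0" "f w0 \<noteq> 0" by (auto simp: zero_less_mult_iff)
qed

lemma same_oline_sym: "same_oline L L' \<Longrightarrow> same_oline L' L"
  unfolding same_oline_def by (auto simp: mult.commute)

lemma same_oline_trans:
  assumes "same_oline L1 L2" "same_oline L2 L3" shows "same_oline L1 L3"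
proof -
  obtain a1 b1 a2 b2 a3 b3 where L: "L1 = (a1,b1)" "L2 = (a2,b2)" "L3 = (a3,b3)" by (metis prod.exhaust)
  have sp: "span {a2,b2} = span {a1,b1}" "span {a3,b3} = span {a2,b2}"
    using assms by (auto simp: same_oline_def lspan_def L)
  obtain k where k: "\<forall>w1 w2 w3. det (rows5 a2 b2 w1 w2 w3) = k * det (rows5 a1 b1 w1 w2 w3)"
    using oline_ratio[OF sp(1)] by blast
  obtain k' where k': "\<forall>w1 w2 w3. det (rows5 a3 b3 w1 w2 w3) = k' * det (rows5 a2 b2 w1 w2 w3)"
    using oline_ratio[OF sp(2)] by blast
  obtain w1 w2 w3 where w: "det (rows5 a1 b1 w1 w2 w3) * det (rows5 a2 b2 w1 w2 w3) > 0"
    using assms(1) by (auto simp: same_oline_def L)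
  obtain v1 v2 v3 where v: "det (rows5 a2 b2 v1 v2 v3) * det (rows5 a3 b3 v1 v2 v3) > 0"
    using assms(2) by (auto simp: same_oline_def L)
  have kp: "k > 0" and nz: "det (rows5 a1 b1 w1 w2 w3) \<noteq> 0"
    using pos_ratio[of "\<lambda>(w1,w2,w3). det (rows5 a2 b2 w1 w2 w3)" k "\<lambda>(w1,w2,w3). det (rows5 a1 b1 w1 w2 w3)" "(w1,w2,w3)"] k w by (auto simp: mult.commute)
  have kp': "k' > 0"
    using pos_ratio[of "\<lambda>(w1,w2,w3). det (rows5 a3 b3 w1 w2 w3)" k' "\<lambda>(w1,w2,w3). det (rows5 a2 b2 w1 w2 w3)" "(v1,v2,v3)"] k' v by (auto simp: mult.commute)
  have "det (rows5 a1 b1 w1 w2 w3) * det (rows5 a3 b3 w1 w2 w3) = (k' * k) * (det (rows5 a1 b1 w1 w2 w3))^2"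
    using k k' by (simp add: power2_eq_square algebra_simps)
  also have "\<dots> > 0" using kp kp' nz by simp
  finally show ?thesis using assms L sp by (auto simp: same_oline_def lspan_def)
qed

lemma same_oplane_sym: "same_oplane P P' \<Longrightarrow> same_oplane P' P"
  unfolding same_oplane_def by (auto simp: mult.commute split: prod.splits)

lemma same_oplane_trans:
  assumes "same_oplane P1 P2" "same_oplane P2 P3" shows "same_oplane P1 P3"
proof -
  obtain a1 b1 c1 a2 b2 c2 a3 b3 c3 where L: "P1 = (a1,b1,c1)" "P2 = (a2,b2,c2)" "P3 = (a3,b3,c3)" by (metis prod.exhaust)
  have sp: "span {a2,b2,c2} = span {a1,b1,c1}" "span {a3,b3,c3} = span {a2,b2,c2}"
    using assms by (auto simp: same_oplane_def pspan_def L)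
  obtain k where k: "\<forall>w1 w2. det (rows5 a2 b2 c2 w1 w2) = k * det (rows5 a1 b1 c1 w1 w2)"
    using oplane_ratio[OF sp(1)] by blast
  obtain k' where k': "\<forall>w1 w2. det (rows5 a3 b3 c3 w1 w2) = k' * det (rows5 a2 b2 c2 w1 w2)"
    using oplane_ratio[OF sp(2)] by blast
  obtain w1 w2 where w: "det (rows5 a1 b1 c1 w1 w2) * det (rows5 a2 b2 c2 w1 w2) > 0"
    using assms(1) by (auto simp: same_oplane_def L)
  obtain v1 v2 where v: "det (rows5 a2 b2 c2 v1 v2) * det (rows5 a3 b3 c3 v1 v2) > 0"
    using assms(2) by (auto simp: same_oplane_def L)
  have kp: "k > 0" and nz: "det (rows5 a1 b1 c1 w1 w2) \<noteq> 0"
    using pos_ratio[of "\<lambda>(w1,w2). det (rows5 a2 b2 c2 w1 w2)" k "\<lambda>(w1,w2). det (rows5 a1 b1 c1 w1 w2)" "(w1,w2)"] k w by (auto simp: mult.commute)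
  have kp': "k' > 0"
    using pos_ratio[of "\<lambda>(w1,w2). det (rows5 a3 b3 c3 w1 w2)" k' "\<lambda>(w1,w2). det (rows5 a2 b2 c2 w1 w2)" "(v1,v2)"] k' v by (auto simp: mult.commute)
  have "det (rows5 a1 b1 c1 w1 w2) * det (rows5 a3 b3 c3 w1 w2) = (k' * k) * (det (rows5 a1 b1 c1 w1 w2))^2"
    using k k' by (simp add: power2_eq_square algebra_simps)
  also have "\<dots> > 0" using kp kp' nz by simp
  finally show ?thesis using assms L sp by (auto simp: same_oplane_def pspan_def)
qed



lemma act_comp: "act A (act B X) = act (A ** B) X"
proof (cases X)
  case (HLine L) then show ?thesis by (cases L) (simp add: matrix_vector_mul_assoc)
next
  case (HFlag L P) then show ?thesis by (cases L; cases P rule: prod_cases3) (simp add: matrix_vector_mul_assoc)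
qed

lemma act_id: "act (mat 1) X = X"
proof (cases X)
  case (HLine L) then show ?thesis by (cases L) simp
next
  case (HFlag L P) then show ?thesis by (cases L; cases P rule: prod_cases3) simp
qed

lemma heq_sym: "heq X Y \<Longrightarrow> heq Y X"
  by (cases X; cases Y) (auto intro: same_oline_sym same_oplane_sym)

lemma heq_trans: "heq X Y \<Longrightarrow> heq Y Z \<Longrightarrow> heq X Z"
  by (cases X; cases Y; cases Z) (auto intro: same_oline_trans same_oplane_trans)

lemma isom_left_inv: "is_or_isom A \<Longrightarrow> matrix_inv A *v (A *v x) = x"
  using inv_facts[OF isom_invertible] by (simp add: matrix_vector_mul_assoc)

lemma dim_act: assumes "is_or_isom A" shows "dim ((*v) A ` S) = dim S"
proof -
  have "dim ((*v) A ` S) \<le> dim S" by (rule dim_image_le) simp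
  moreover have "(*v) (matrix_inv A) ` ((*v) A ` S) = S"
    using isom_left_inv[OF assms] by (auto simp: image_iff)
  then have "dim S \<le> dim ((*v) A ` S)" using dim_image_le[of "(*v) (matrix_inv A)" "(*v) A ` S"] by simp
  ultimately show ?thesis by simp
qed

lemma span_act: "span ((*v) (A::mat5) ` S) = (*v) A ` span S"
  by (rule span_linear_image) (rule matrix_vector_mul_linear)

lemma oline_act: assumes A: "is_or_isom A" and L: "is_oline (a,b)" shows "is_oline (A *v a, A *v b)"
proof -
  have "dim {A *v a, A *v b} = dim {a,b}" using dim_act[OF A, of "{a,b}"] by simp
  moreover obtain x where "x \<in> span {a,b}" "x \<in> H4" using L by (auto simp: is_oline_def lspan_def)
  then have "A *v x \<in> span {A *v a, A *v b}" "A *v x \<in> H4"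
    using span_act[of A "{a,b}"] A by (auto simp: is_or_isom_def)
  ultimately show ?thesis using L by (auto simp: is_oline_def lspan_def)
qed

lemma oplane_act: assumes A: "is_or_isom A" and L: "is_oplane (a,b,c)" shows "is_oplane (A *v a, A *v b, A *v c)"
proof -
  have "dim {A *v a, A *v b, A *v c} = dim {a,b,c}" using dim_act[OF A, of "{a,b,c}"] by simp
  moreover obtain x where "x \<in> span {a,b,c}" "x \<in> H4" using L by (auto simp: is_oplane_def pspan_def)
  then have "A *v x \<in> span {A *v a, A *v b, A *v c}" "A *v x \<in> H4"
    using span_act[of A "{a,b,c}"] A by (auto simp: is_or_isom_def)
  ultimately show ?thesis using L by (auto simp: is_oplane_def pspan_def)
qed

lemma same_oline_act: assumes A: "is_or_isom A" and S: "same_oline (a,b) (a',b')"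
  shows "same_oline (A *v a, A *v b) (A *v a', A *v b')"
proof -
  have sp: "span {a,b} = span {a',b'}" using S by (simp add: same_oline_def lspan_def)
  have sp2: "span {A *v a, A *v b} = span {A *v a', A *v b'}"
    using span_act[of A "{a,b}"] span_act[of A "{a',b'}"] sp by simp
  obtain w1 w2 w3 where w: "det (rows5 a b w1 w2 w3) * det (rows5 a' b' w1 w2 w3) > 0"
    using S by (auto simp: same_oline_def)
  have dA: "det A > 0" using A by (simp add: is_or_isom_def)
  have "det (rows5 (A *v a) (A *v b) (A *v w1) (A *v w2) (A *v w3)) * det (rows5 (A *v a') (A *v b') (A *v w1) (A *v w2) (A *v w3))
     = (det A * det A) * (det (rows5 a b w1 w2 w3) * det (rows5 a' b' w1 w2 w3))"
    by (simp add: det_rows5_act algebra_simps)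
  also have "\<dots> > 0" using w dA by simp
  finally have "det (rows5 (A *v a) (A *v b) (A *v w1) (A *v w2) (A *v w3)) * det (rows5 (A *v a') (A *v b') (A *v w1) (A *v w2) (A *v w3)) > 0" .
  then show ?thesis using sp2 S oline_act[OF A] by (auto simp: same_oline_def lspan_def)
qed

lemma same_oplane_act: assumes A: "is_or_isom A" and S: "same_oplane (a,b,c) (a',b',c')"
  shows "same_oplane (A *v a, A *v b, A *v c) (A *v a', A *v b', A *v c')"
proof -
  have sp: "span {a,b,c} = span {a',b',c'}" using S by (simp add: same_oplane_def pspan_def)
  have sp2: "span {A *v a, A *v b, A *v c} = span {A *v a', A *v b', A *v c'}"
    using span_act[of A "{a,b,c}"] span_act[of A "{a',b',c'}"] sp by simp
  obtain w1 w2 where w: "det (rows5 a b c w1 w2) * det (rows5 a' b' c' w1 w2) > 0"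
    using S by (auto simp: same_oplane_def)
  have dA: "det A > 0" using A by (simp add: is_or_isom_def)
  have "det (rows5 (A *v a) (A *v b) (A *v c) (A *v w1) (A *v w2)) * det (rows5 (A *v a') (A *v b') (A *v c') (A *v w1) (A *v w2))
     = (det A * det A) * (det (rows5 a b c w1 w2) * det (rows5 a' b' c' w1 w2))"
    by (simp add: det_rows5_act algebra_simps)
  also have "\<dots> > 0" using w dA by simp
  finally have "det (rows5 (A *v a) (A *v b) (A *v c) (A *v w1) (A *v w2)) * det (rows5 (A *v a') (A *v b') (A *v c') (A *v w1) (A *v w2)) > 0" .
  then show ?thesis using sp2 S oplane_act[OF A] by (auto simp: same_oplane_def pspan_def)
qed

lemma heq_act: assumes A: "is_or_isom A" and h: "heq X Y" shows "heq (act A X) (act A Y)"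
proof (cases X)
  case (HLine L)
  then obtain L' where Y: "Y = HLine L'" using h by (cases Y) auto
  show ?thesis using h same_oline_act[OF A] unfolding HLine Y by (cases L; cases L') auto
next
  case (HFlag L P)
  then obtain L' P' where Y: "Y = HFlag L' P'" using h by (cases Y) auto
  show ?thesis using h same_oline_act[OF A] same_oplane_act[OF A] unfolding HFlag Y
    by (cases L; cases L'; cases P rule: prod_cases3; cases P' rule: prod_cases3) auto
qed

lemma heq_inv: assumes A: "is_or_isom A" and h: "heq (act A X) Y" shows "heq (act (matrix_inv A) Y) X"
proof -
  have "heq (act (matrix_inv A) (act A X)) (act (matrix_inv A) Y)" by (rule heq_act[OF isom_inv[OF A] h])
  moreover have "act (matrix_inv A) (act A X) = X"
    using inv_facts[OF isom_invertible[OF A]] by (simp add: act_comp act_id)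
  ultimately show ?thesis using heq_sym by auto
qed

lemma heq_comp: assumes A: "is_or_isom A" and "heq (act B X) Y" "heq (act A Y) Z" shows "heq (act (A ** B) X) Z"
  using heq_act[OF A assms(2)] assms(3) heq_trans by (metis act_comp)



lemma r5_4: "rows5 a b c d z = (\<chi> i. if i = 4 then z else rows5 a b c d 0 $ i)"
proof -
  have "rows5 a b c d z $ i = (\<chi> i. if i = 4 then z else rows5 a b c d 0 $ i) $ i" for i
    using exhaust_5[of i] by (elim disjE) (simp_all add: rows5_def)
  then show ?thesis by (rule vec_eq_iff[THEN iffD2, OF allI])
qed

lemma det5_mul4: "det (rows5 a b c d (k *\<^sub>R x)) = k * det (rows5 a b c d x)"
  using det_row_mul[where k=4 and c=k and a="\<lambda>_. x" and b="\<lambda>i. rows5 a b c d 0 $ i"]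
  by (metis r5_4 scalar_mult_eq_scaleR)

lemma sum_5: "sum f (UNIV::5 set) = f 0 + f 1 + f 2 + f 3 + f 4"
  unfolding UNIV_5 by (simp add: ac_simps)

lemma rows5_nth: "rows5 a b c d e $ 0 = a" "rows5 a b c d e $ 1 = b" "rows5 a b c d e $ 2 = c"
   "rows5 a b c d e $ 3 = d" "rows5 a b c d e $ 4 = e"
  by (simp_all add: rows5_def)

lemma tr_rows5: "transpose (rows5 a b c d e) *v k = k$0 *\<^sub>R a + k$1 *\<^sub>R b + k$2 *\<^sub>R c + k$3 *\<^sub>R d + k$4 *\<^sub>R e"
  unfolding matrix_vector_column transpose_transpose sum_5 rows5_nth scalar_mult_eq_scaleR ..

lemma not_in_span_orth: "mink x x \<noteq> 0 \<Longrightarrow> \<forall>s\<in>S. mink x s = 0 \<Longrightarrow> x \<notin> span S"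
  using mink_span_zero by blast

lemma extend_vec: assumes "dim S > card B" "finite (B::vec set)" shows "\<exists>y\<in>S. y \<notin> span B"
proof (rule ccontr)
  assume "\<not> ?thesis"
  then have "S \<subseteq> span B" by auto
  then have "dim S \<le> card B" using dim_le_card assms(2) by blast
  then show False using assms(1) by simp
qed

lemma inv_span2: "span {(C::mat5) *v a, C *v b} = span {a, b} \<Longrightarrow> x \<in> span {a, b} \<Longrightarrow> C *v x \<in> span {a, b}"
  using span_act[of C "{a,b}"] by auto

lemma inv_span3: "span {(C::mat5) *v a, C *v b, C *v c} = span {a, b, c} \<Longrightarrow> x \<in> span {a, b, c} \<Longrightarrow> C *v x \<in> span {a, b, c}"
  using span_act[of C "{a,b,c}"] by auto

lemma sq1: "(t::real) * t = 1 \<Longrightarrow> t > 0 \<Longrightarrow> t = 1"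
proof -
  assume "t * t = 1" "t > 0"
  then have "(t - 1) * (t + 1) = 0" by (simp add: algebra_simps)
  then show "t = 1" using \<open>t > 0\<close> by auto
qed

lemma orient2:
  assumes "a' = x1 *\<^sub>R p + y1 *\<^sub>R u" "b' = x2 *\<^sub>R p + y2 *\<^sub>R u" "C *v p = p" "C *v u = t *\<^sub>R u"
    "det (rows5 (C *v a') (C *v b') w1 w2 w3) * det (rows5 a' b' w1 w2 w3) > 0"
  shows "t > 0"
proof -
  have e: "C *v a' = x1 *\<^sub>R p + (y1*t) *\<^sub>R u" "C *v b' = x2 *\<^sub>R p + (y2*t) *\<^sub>R u"
    using assms(1-4) by (simp_all add: matrix_vector_right_distrib matrix_vector_mult_scaleR)
  define D where "D = det (rows5 p u w1 w2 w3)"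
  define K where "K = x1*y2 - y1*x2"
  have X: "det (rows5 (C *v a') (C *v b') w1 w2 w3) = t * (K * D)"
    unfolding e det5_2 D_def K_def by (simp add: algebra_simps)
  have Y: "det (rows5 a' b' w1 w2 w3) = K * D"
    unfolding assms(1,2) det5_2 D_def K_def by (simp add: algebra_simps)
  have "t * (K * D)^2 = det (rows5 (C *v a') (C *v b') w1 w2 w3) * det (rows5 a' b' w1 w2 w3)"
    unfolding X Y by (simp add: power2_eq_square)
  then have "t * (K * D)^2 > 0" using assms(5) by simp
  then show ?thesis by (simp add: zero_less_mult_iff)
qed

lemma orient3:
  assumes "a' = x1 *\<^sub>R p + y1 *\<^sub>R v + z1 *\<^sub>R w" "b' = x2 *\<^sub>R p + y2 *\<^sub>R v + z2 *\<^sub>R w"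
    "c' = x3 *\<^sub>R p + y3 *\<^sub>R v + z3 *\<^sub>R w"
    "C *v p = p" "C *v v = v" "C *v w = t *\<^sub>R w"
    "det (rows5 (C *v a') (C *v b') (C *v c') w1 w2) * det (rows5 a' b' c' w1 w2) > 0"
  shows "t > 0"
proof -
  have e: "C *v a' = x1 *\<^sub>R p + y1 *\<^sub>R v + (z1*t) *\<^sub>R w" "C *v b' = x2 *\<^sub>R p + y2 *\<^sub>R v + (z2*t) *\<^sub>R w"
     "C *v c' = x3 *\<^sub>R p + y3 *\<^sub>R v + (z3*t) *\<^sub>R w"
    using assms(1-6) by (simp_all add: matrix_vector_right_distrib matrix_vector_mult_scaleR)
  define D where "D = det (rows5 p v w w1 w2)"
  define K where "K = x1*(y2*z3 - z2*y3) - y1*(x2*z3 - z2*x3) + z1*(x2*y3 - y2*x3)"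
  have X: "det (rows5 (C *v a') (C *v b') (C *v c') w1 w2) = t * (K * D)"
    unfolding e det5_3 D_def K_def by (simp add: algebra_simps)
  have Y: "det (rows5 a' b' c' w1 w2) = K * D"
    unfolding assms(1,2,3) det5_3 D_def K_def by (simp add: algebra_simps)
  have "t * (K * D)^2 = det (rows5 (C *v a') (C *v b') (C *v c') w1 w2) * det (rows5 a' b' c' w1 w2)"
    unfolding X Y by (simp add: power2_eq_square)
  then have "t * (K * D)^2 > 0" using assms(7) by simp
  then show ?thesis by (simp add: zero_less_mult_iff)
qed



lemma isom_mink: "is_or_isom C \<Longrightarrow> mink (C *v x) (C *v y) = mink x y"
  by (simp add: is_or_isom_def)

lemma unique_isom:
  fixes C :: mat5
  assumes C: "is_or_isom C"
  and L: "is_oline (a,b)" and P: "is_oplane (c,d,e)" and LP: "lspan (a,b) \<subseteq> pspan (c,d,e)"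
  and O: "orth_lf (a',b') (a,b) (c,d,e)"
  and h1: "same_oline (C *v a', C *v b') (a',b')"
  and h2: "same_oline (C *v a, C *v b) (a,b)"
  and h3: "same_oplane (C *v c, C *v d, C *v e) (c,d,e)"
  shows "C = mat 1"
proof -
  have Cm: "\<And>x y. mink (C *v x) (C *v y) = mink x y" using C by (simp add: is_or_isom_def)
  have CH: "\<And>x. x \<in> H4 \<Longrightarrow> C *v x \<in> H4" using C by (simp add: is_or_isom_def)
  have Clin: "\<And>x y. C *v (x + y) = C *v x + C *v y" "\<And>k x. C *v (k *\<^sub>R x) = k *\<^sub>R (C *v x)"
    "\<And>x y. C *v (x - y) = C *v x - C *v y"
    by (simp_all add: matrix_vector_right_distrib matrix_vector_mult_scaleR matrix_vector_mult_diff_distrib)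
  obtain p u where p: "p \<in> H4" "p \<in> span {a,b}" and u: "u \<noteq> 0" "mink p u = 0"
    and L'sp: "span {a',b'} = span {p,u}" and uP: "\<forall>w\<in>span {c,d,e}. mink u w = 0"
    using O by (auto simp: orth_lf_def lspan_def pspan_def)
  have mp: "mink p p = -1" using p by (simp add: H4_def)
  have mu: "mink u u > 0" using spacelike[OF p(1) u(2) u(1)] .
  have abP: "span {a,b} \<subseteq> span {c,d,e}" using LP by (simp add: lspan_def pspan_def)
  have sab: "span {C *v a, C *v b} = span {a,b}" using h2 by (simp add: same_oline_def lspan_def)
  have sa'b': "span {C *v a', C *v b'} = span {a',b'}" using h1 by (simp add: same_oline_def lspan_def)
  have scde: "span {C *v c, C *v d, C *v e} = span {c,d,e}" using h3 by (simp add: same_oplane_def pspan_def)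
  have dab: "dim {a,b} = 2" using L by (simp add: is_oline_def)
  have dcde: "dim {c,d,e} = 3" using P by (simp add: is_oplane_def)
  have pP: "p \<in> span {c,d,e}" using p abP by auto
  have up: "mink u p = 0" using u(2) mink_sym by metis
  have Cp: "C *v p = p"
  proof -
    have "C *v p \<in> span {a,b}" using inv_span2[OF sab p(2)] .
    then have "mink u (C *v p) = 0" using uP abP by auto
    have "p \<in> span {a',b'}" using L'sp by (simp add: span_base)
    then have "C *v p \<in> span {p,u}" using inv_span2[OF sa'b'] L'sp by auto
    then obtain al be where ab: "C *v p = al *\<^sub>R p + be *\<^sub>R u" using span2_coeffs by blast
    have "be * mink u u = 0" using \<open>mink u (C *v p) = 0\<close> unfolding ab by (simp add: mink_simps up)
    then have "be = 0" using mu by simp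
    then have e: "C *v p = al *\<^sub>R p" using ab by simp
    have "mink (C *v p) (C *v p) = -1" "(C *v p)$0 > 0" using CH[OF p(1)] by (auto simp: H4_def)
    then have "al = 1" using nonspacelike_unit[OF p(1)] unfolding e by blast
    then show ?thesis using e by simp
  qed
  obtain t where t: "t \<in> {a,b}" "t \<notin> span {p}"
    using extend_vec[of "{p}" "{a,b}"] dab by auto
  define v where "v = t + mink t p *\<^sub>R p"
  have pv: "mink p v = 0" unfolding v_def by (simp add: mink_simps mp mink_sym[of p t])
  have vp: "mink v p = 0" using pv mink_sym by metis
  have v0: "v \<noteq> 0"
  proof
    assume "v = 0"
    then have "t = (- mink t p) *\<^sub>R p" unfolding v_def by (simp add: algebra_simps eq_neg_iff_add_eq_0)
    moreover have "(- mink t p) *\<^sub>R p \<in> span {p}" by (intro span_scale) (auto intro: span_base)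
    ultimately show False using t by simp
  qed
  have mv: "mink v v > 0" using spacelike[OF p(1) pv v0] .
  have vab: "v \<in> span {a,b}" unfolding v_def using t p
    by (intro span_add span_scale) (auto intro: span_base)
  have dpv: "dim {p,v} = 2"
  proof -
    have "p \<notin> span {v}" using not_in_span_orth[of p "{v}"] mp pv by simp
    moreover have "v \<notin> span {}" using v0 by simp
    ultimately show ?thesis by (simp add: dim_insert)
  qed
  have spv: "span {p,v} = span {a,b}"
  proof (rule subspace_dim_equal)
    show "span {p,v} \<subseteq> span {a,b}" using p vab by (intro span_minimal) (auto simp: subspace_span)
    show "dim (span {a,b}) \<le> dim (span {p,v})" using dab dpv by simp
  qed (auto simp: subspace_span)
  have cardpv: "card {p,v} < 3" by (simp add: card_insert_if)
  obtain y where y: "y \<in> {c,d,e}" "y \<notin> span {p,v}"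
    using extend_vec[of "{p,v}" "{c,d,e}"] dcde cardpv by auto
  define w where "w = y + mink y p *\<^sub>R p - (mink y v / mink v v) *\<^sub>R v"
  have pw: "mink p w = 0" unfolding w_def by (simp add: mink_simps mp mink_sym[of p y] pv)
  have wp: "mink w p = 0" using pw mink_sym by metis
  have vw: "mink v w = 0" unfolding w_def using mv by (simp add: mink_simps vp mink_sym[of v y])
  have wv: "mink w v = 0" using vw mink_sym by metis
  have w0: "w \<noteq> 0"
  proof
    assume "w = 0"
    then have "y = (mink y v / mink v v) *\<^sub>R v - mink y p *\<^sub>R p" unfolding w_def by (simp add: algebra_simps)
    moreover have "(mink y v / mink v v) *\<^sub>R v - mink y p *\<^sub>R p \<in> span {p,v}"
      by (intro span_diff span_scale) (auto intro: span_base)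
    ultimately show False using y by simp
  qed
  have mw: "mink w w > 0" using spacelike[OF p(1) pw w0] .
  have wcde: "w \<in> span {c,d,e}" unfolding w_def using y pP vab abP
    by (intro span_add span_diff span_scale) (auto intro: span_base)
  have vcde: "v \<in> span {c,d,e}" using vab abP by auto
  have dpvw: "dim {p,v,w} = 3"
  proof -
    have "p \<notin> span {v,w}" using not_in_span_orth[of p "{v,w}"] mp pv pw by simp
    moreover have "v \<notin> span {w}" using not_in_span_orth[of v "{w}"] mv vw by simp
    moreover have "w \<notin> span {}" using w0 by simp
    ultimately show ?thesis by (simp add: dim_insert)
  qed
  have spvw: "span {p,v,w} = span {c,d,e}"
  proof (rule subspace_dim_equal)
    show "span {p,v,w} \<subseteq> span {c,d,e}" using pP vcde wcde by (intro span_minimal) (auto simp: subspace_span)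
    show "dim (span {c,d,e}) \<le> dim (span {p,v,w})" using dcde dpvw by simp
  qed (auto simp: subspace_span)
  have uv: "mink u v = 0" using uP vcde by auto
  have uw: "mink u w = 0" using uP wcde by auto
  have vu: "mink v u = 0" "mink w u = 0" "mink p u = 0" using uv uw up mink_sym by metis+
  have cardpvwu: "card {p,v,w,u} < 5"
    using card_length[of "[p,v,w,u]"] by simp
  obtain y2 where y2: "y2 \<notin> span {p,v,w,u}"
    using extend_vec[of "{p,v,w,u}" UNIV] cardpvwu by auto
  define z where "z = y2 + mink y2 p *\<^sub>R p - (mink y2 v / mink v v) *\<^sub>R v - (mink y2 w / mink w w) *\<^sub>R w
     - (mink y2 u / mink u u) *\<^sub>R u"
  have pz: "mink p z = 0" unfolding z_def by (simp add: mink_simps mp mink_sym[of p y2] pv pw u(2))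
  have vz: "mink v z = 0" unfolding z_def using mv by (simp add: mink_simps vp vw vu mink_sym[of v y2])
  have wz: "mink w z = 0" unfolding z_def using mw by (simp add: mink_simps wp wv vu mink_sym[of w y2])
  have uz: "mink u z = 0" unfolding z_def using mu by (simp add: mink_simps up uv uw mink_sym[of u y2])
  have z0: "z \<noteq> 0"
  proof
    assume "z = 0"
    then have "y2 = (mink y2 v / mink v v) *\<^sub>R v + (mink y2 w / mink w w) *\<^sub>R w
     + (mink y2 u / mink u u) *\<^sub>R u - mink y2 p *\<^sub>R p" unfolding z_def by (simp add: algebra_simps)
    moreover have "\<dots> \<in> span {p,v,w,u}" by (intro span_add span_diff span_scale) (auto intro: span_base)
    ultimately show False using y2 by simp
  qed
  have mz: "mink z z > 0" using spacelike[OF p(1) pz z0] .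
  have Cu: "C *v u = u"
  proof -
    have "u \<in> span {a',b'}" using L'sp by (simp add: span_base)
    then have "C *v u \<in> span {p,u}" using inv_span2[OF sa'b'] L'sp by auto
    then obtain al be where ab: "C *v u = al *\<^sub>R p + be *\<^sub>R u" using span2_coeffs by blast
    have "mink (C *v u) (C *v p) = mink u p" by (rule Cm)
    then have "- al = 0" unfolding ab Cp by (simp add: mink_simps mp up)
    then have e: "C *v u = be *\<^sub>R u" using ab by simp
    have "mink (C *v u) (C *v u) = mink u u" by (rule Cm)
    then have "(be * be) * mink u u = 1 * mink u u" unfolding e by (simp add: mink_simps)
    then have "be * be = 1" using mu by simp
    moreover have "be > 0"
    proof -
      have "a' \<in> span {a',b'}" "b' \<in> span {a',b'}" by (simp_all add: span_base)
      then have i: "a' \<in> span {p,u}" "b' \<in> span {p,u}" using L'sp by simp_all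
      obtain x1 y1 where c1: "a' = x1 *\<^sub>R p + y1 *\<^sub>R u" using span2_coeffs[OF i(1)] by blast
      obtain x2 y2 where c2: "b' = x2 *\<^sub>R p + y2 *\<^sub>R u" using span2_coeffs[OF i(2)] by blast
      note co = c1 c2
      obtain w1 w2 w3 where "det (rows5 (C *v a') (C *v b') w1 w2 w3) * det (rows5 a' b' w1 w2 w3) > 0"
        using h1 by (auto simp: same_oline_def)
      then show ?thesis using orient2[OF co Cp e] by blast
    qed
    ultimately have "be = 1" by (rule sq1)
    then show ?thesis using e by simp
  qed
  have Cv: "C *v v = v"
  proof -
    have "C *v v \<in> span {p,v}" using inv_span2[OF sab vab] spv by auto
    then obtain al be where ab: "C *v v = al *\<^sub>R p + be *\<^sub>R v" using span2_coeffs by blast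
    have "mink (C *v v) (C *v p) = mink v p" by (rule Cm)
    then have "- al = 0" unfolding ab Cp by (simp add: mink_simps mp vp)
    then have e: "C *v v = be *\<^sub>R v" using ab by simp
    have "mink (C *v v) (C *v v) = mink v v" by (rule Cm)
    then have "(be * be) * mink v v = 1 * mink v v" unfolding e by (simp add: mink_simps)
    then have "be * be = 1" using mv by simp
    moreover have "be > 0"
    proof -
      have "a \<in> span {a,b}" "b \<in> span {a,b}" by (simp_all add: span_base)
      then have i: "a \<in> span {p,v}" "b \<in> span {p,v}" using spv by simp_all
      obtain x1 y1 where c1: "a = x1 *\<^sub>R p + y1 *\<^sub>R v" using span2_coeffs[OF i(1)] by blast
      obtain x2 y2 where c2: "b = x2 *\<^sub>R p + y2 *\<^sub>R v" using span2_coeffs[OF i(2)] by blast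
      note co = c1 c2
      obtain w1 w2 w3 where "det (rows5 (C *v a) (C *v b) w1 w2 w3) * det (rows5 a b w1 w2 w3) > 0"
        using h2 by (auto simp: same_oline_def)
      then show ?thesis using orient2[OF co Cp e] by blast
    qed
    ultimately have "be = 1" by (rule sq1)
    then show ?thesis using e by simp
  qed
  have Cw: "C *v w = w"
  proof -
    have "C *v w \<in> span {p,v,w}" using inv_span3[OF scde wcde] spvw by auto
    then obtain al be ga where ab: "C *v w = al *\<^sub>R p + be *\<^sub>R v + ga *\<^sub>R w" using span3_coeffs by blast
    have "mink (C *v w) (C *v p) = mink w p" by (rule Cm)
    then have "- al = 0" unfolding ab Cp by (simp add: mink_simps mp vp wp)
    moreover have "mink (C *v w) (C *v v) = mink w v" by (rule Cm)
    ultimately have "be * mink v v = 0" unfolding ab Cv by (simp add: mink_simps pv wv)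
    then have "be = 0" using mv by simp
    then have e: "C *v w = ga *\<^sub>R w" using ab \<open>- al = 0\<close> by simp
    have "mink (C *v w) (C *v w) = mink w w" by (rule Cm)
    then have "(ga * ga) * mink w w = 1 * mink w w" unfolding e by (simp add: mink_simps)
    then have "ga * ga = 1" using mw by simp
    moreover have "ga > 0"
    proof -
      have "c \<in> span {c,d,e}" "d \<in> span {c,d,e}" "e \<in> span {c,d,e}" by (simp_all add: span_base)
      then have i: "c \<in> span {p,v,w}" "d \<in> span {p,v,w}" "e \<in> span {p,v,w}" using spvw by simp_all
      obtain x1 y1 z1 where c1: "c = x1 *\<^sub>R p + y1 *\<^sub>R v + z1 *\<^sub>R w" using span3_coeffs[OF i(1)] by blast
      obtain x2 y2 z2 where c2: "d = x2 *\<^sub>R p + y2 *\<^sub>R v + z2 *\<^sub>R w" using span3_coeffs[OF i(2)] by blast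
      obtain x3 y3 z3 where c3: "e = x3 *\<^sub>R p + y3 *\<^sub>R v + z3 *\<^sub>R w" using span3_coeffs[OF i(3)] by blast
      note co = c1 c2 c3
      obtain w1 w2 where "det (rows5 (C *v c) (C *v d) (C *v e) w1 w2) * det (rows5 c d e w1 w2) > 0"
        using h3 by (auto simp: same_oplane_def)
      then show ?thesis using orient3[OF co Cp Cv e] by blast
    qed
    ultimately have "ga = 1" by (rule sq1)
    then show ?thesis using e by simp
  qed
  have orth: "mink p v = 0" "mink p w = 0" "mink p u = 0" "mink p z = 0"
    "mink v p = 0" "mink v w = 0" "mink v u = 0" "mink v z = 0"
    "mink w p = 0" "mink w v = 0" "mink w u = 0" "mink w z = 0"
    "mink u p = 0" "mink u v = 0" "mink u w = 0" "mink u z = 0"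
    "mink z p = 0" "mink z v = 0" "mink z w = 0" "mink z u = 0"
    using pv pw u(2) pz vp vw vu vz wp wv wz uz up uv uw mink_sym by metis+
  define R where "R = rows5 p v w u z"
  define T where "T = transpose R"
  have Tk: "\<And>k. T *v k = k$0 *\<^sub>R p + k$1 *\<^sub>R v + k$2 *\<^sub>R w + k$3 *\<^sub>R u + k$4 *\<^sub>R z"
    unfolding T_def R_def by (rule tr_rows5)
  have T0: "k = 0" if "T *v k = 0" for k
  proof -
    let ?s = "k$0 *\<^sub>R p + k$1 *\<^sub>R v + k$2 *\<^sub>R w + k$3 *\<^sub>R u + k$4 *\<^sub>R z"
    have s0: "?s = 0" using that Tk by simp
    have "mink p ?s = 0" "mink v ?s = 0" "mink w ?s = 0" "mink u ?s = 0" "mink z ?s = 0"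
      unfolding s0 by (simp_all add: mink_simps)
    then have "k$0 * mink p p = 0" "k$1 * mink v v = 0" "k$2 * mink w w = 0" "k$3 * mink u u = 0" "k$4 * mink z z = 0"
      by (simp_all add: mink_simps orth)
    then show ?thesis using mp mv mw mu mz by (simp add: vec5_eq0)
  qed
  have inj: "inj ((*v) T)"
  proof (rule injI)
    fix k1 k2 assume "T *v k1 = T *v k2"
    then have "T *v (k1 - k2) = 0" by (simp add: matrix_vector_mult_diff_distrib)
    then show "k1 = k2" using T0 by fastforce
  qed
  have dT: "det T \<noteq> 0" using det_nz_iff_inj[of "(*v) T"] inj by (simp add: matrix_of_matrix_vector_mul)
  have invT: "invertible T" using dT invertible_det_nz by blast
  have Tsurj: "\<exists>k. x = T *v k" for x
  proof
    show "x = T *v (matrix_inv T *v x)" using inv_facts[OF invT] by (simp add: matrix_vector_mul_assoc)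
  qed
  obtain k where kz: "C *v z = T *v k" using Tsurj by blast
  have "mink (C *v z) (C *v p) = mink z p" "mink (C *v z) (C *v v) = mink z v"
    "mink (C *v z) (C *v w) = mink z w" "mink (C *v z) (C *v u) = mink z u" by (simp_all add: Cm)
  then have "k$0 * mink p p = 0" "k$1 * mink v v = 0" "k$2 * mink w w = 0" "k$3 * mink u u = 0"
    unfolding kz Tk Cp Cv Cw Cu by (simp_all add: mink_simps orth)
  then have "k$0 = 0" "k$1 = 0" "k$2 = 0" "k$3 = 0" using mp mv mw mu by simp_all
  then have Cz: "C *v z = k$4 *\<^sub>R z" using kz Tk by simp
  have "mink (C *v z) (C *v z) = mink z z" by (rule Cm)
  then have "(k$4 * k$4) * mink z z = 1 * mink z z" unfolding Cz by (simp add: mink_simps)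
  then have k4: "k$4 * k$4 = 1" using mz by simp
  have "rows5 (C *v p) (C *v v) (C *v w) (C *v u) (C *v z) = R ** transpose C" by (simp add: R_def rows5_act)
  then have "rows5 p v w u (k$4 *\<^sub>R z) = R ** transpose C" using Cp Cv Cw Cu Cz by simp
  then have "det (rows5 p v w u (k$4 *\<^sub>R z)) = det R * det C" by (simp add: det_mul)
  then have "k$4 * det R = det R * det C" unfolding det5_mul4 R_def .
  moreover have "det R \<noteq> 0" using dT by (simp add: T_def)
  ultimately have "det C = k$4" by simp
  moreover have "det C > 0" using C by (simp add: is_or_isom_def)
  ultimately have "k$4 = 1" using k4 sq1[of "k$4"] by simp
  then have Cz': "C *v z = z" using Cz by simp
  have "C *v x = mat 1 *v x" for x
  proof -
    obtain k where "x = T *v k" using Tsurj by blast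
    then show ?thesis by (simp add: Tk Clin Cp Cv Cw Cu Cz')
  qed
  then show ?thesis by (simp add: matrix_eq)
qed



lemma unique_obj:
  assumes C: "is_or_isom C" and X: "wf_hobj X" and Y: "wf_hobj Y" and o: "orth X Y"
    and hX: "heq (act C X) X" and hY: "heq (act C Y) Y"
  shows "C = mat 1"
proof (cases X)
  case (HLine L')
  then obtain L P where Y': "Y = HFlag L P" using o by (cases Y) auto
  obtain a' b' where L': "L' = (a',b')" by (cases L')
  obtain a b where L: "L = (a,b)" by (cases L)
  obtain c d e where P: "P = (c,d,e)" by (cases P rule: prod_cases3)
  show ?thesis
    apply (rule unique_isom[OF C, of a b c d e a' b'])
    using X Y o hX hY unfolding HLine Y' L' L P by auto
next
  case (HFlag L P)
  then obtain L' where Y': "Y = HLine L'" using o by (cases Y) auto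
  obtain a' b' where L': "L' = (a',b')" by (cases L')
  obtain a b where L: "L = (a,b)" by (cases L)
  obtain c d e where P: "P = (c,d,e)" by (cases P rule: prod_cases3)
  show ?thesis
    apply (rule unique_isom[OF C, of a b c d e a' b'])
    using X Y o hX hY unfolding HFlag Y' L' L P by auto
qed

lemma inv_inv: assumes "invertible (A::mat5)" shows "matrix_inv (matrix_inv A) = A"
proof -
  note f = inv_facts[OF assms]
  have "invertible (matrix_inv A)" unfolding invertible_def using f by blast
  note g = inv_facts[OF this]
  have "matrix_inv (matrix_inv A) = matrix_inv (matrix_inv A) ** (matrix_inv A ** A)" by (simp add: f)
  also have "\<dots> = A" by (simp add: matrix_mul_assoc g)
  finally show ?thesis .
qed

lemma inv_id: "matrix_inv (mat 1 :: mat5) = mat 1"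
proof -
  have "invertible (mat 1 :: mat5)" unfolding invertible_def by (rule exI[of _ "mat 1"]) simp
  from inv_facts(1)[OF this] show ?thesis by simp
qed

lemma conj_step: assumes "invertible (Q::mat5)" shows "Q ** (matrix_inv Q ** T ** Q) = T ** Q"
proof -
  note f = inv_facts[OF assms]
  have "Q ** (matrix_inv Q ** T ** Q) = (Q ** matrix_inv Q) ** T ** Q" by (simp add: matrix_mul_assoc)
  then show ?thesis by (simp add: f)
qed

lemma compo_isom: "(\<forall>k\<in>{1..n}. is_or_isom (\<tau> k)) \<Longrightarrow> is_or_isom (compo \<tau> n)"
  by (induction n) (auto simp: isom_id intro: isom_mult)



theorem lemma6p6:
  fixes S :: "nat \<Rightarrow> hobj" and \<tau> :: "nat \<Rightarrow> mat5"
  assumes hex: "oriented_aug_hexagon S"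
    and tau: "\<forall>n\<in>{1..6}. is_or_isom (\<tau> n) \<and> heq (act (\<tau> n) (S n)) (S n) \<and>
                 heq (act (\<tau> n) (S (prv n))) (S (nxt n))"
  shows "\<tau> 6 ** \<tau> 5 ** \<tau> 4 ** \<tau> 3 ** \<tau> 2 ** \<tau> 1 = mat 1 \<and>
         eta \<tau> 1 ** eta \<tau> 2 ** eta \<tau> 3 ** eta \<tau> 4 ** eta \<tau> 5 ** eta \<tau> 6 = mat 1 \<and>
         (\<forall>n\<in>{1,3,5}. heq (act (iota \<tau> n) (S n)) (S 1) \<and> heq (act (iota \<tau> n) (S (nxt n))) (S 6)) \<and>
         (\<forall>n\<in>{2,4,6}. heq (act (iota \<tau> n) (S n)) (S 6) \<and> heq (act (iota \<tau> n) (S (nxt n))) (S 1))"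
proof -
  have nv: "nxt 1 = 2" "nxt 2 = 3" "nxt 3 = 4" "nxt 4 = 5" "nxt 5 = 6" "nxt 6 = 1"
    "prv 1 = 6" "prv 2 = 1" "prv 3 = 2" "prv 4 = 3" "prv 5 = 4" "prv 6 = 5"
    by (simp_all add: nxt_def prv_def)
  have I: "is_or_isom (\<tau> n)" "heq (act (\<tau> n) (S n)) (S n)" "heq (act (\<tau> n) (S (prv n))) (S (nxt n))"
    if "n \<in> {1..6}" for n using tau that by auto
  have m: "(1::nat) \<in> {1..6}" "(2::nat) \<in> {1..6}" "(3::nat) \<in> {1..6}" "(4::nat) \<in> {1..6}"
    "(5::nat) \<in> {1..6}" "(6::nat) \<in> {1..6}" by simp_all
  have I1: "is_or_isom (\<tau> 1)" "heq (act (\<tau> 1) (S 1)) (S 1)" "heq (act (\<tau> 1) (S 6)) (S 2)"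
    using I[OF m(1)] unfolding nv .
  have I2: "is_or_isom (\<tau> 2)" "heq (act (\<tau> 2) (S 2)) (S 2)" "heq (act (\<tau> 2) (S 1)) (S 3)"
    using I[OF m(2)] unfolding nv .
  have I3: "is_or_isom (\<tau> 3)" "heq (act (\<tau> 3) (S 3)) (S 3)" "heq (act (\<tau> 3) (S 2)) (S 4)"
    using I[OF m(3)] unfolding nv .
  have I4: "is_or_isom (\<tau> 4)" "heq (act (\<tau> 4) (S 4)) (S 4)" "heq (act (\<tau> 4) (S 3)) (S 5)"
    using I[OF m(4)] unfolding nv .
  have I5: "is_or_isom (\<tau> 5)" "heq (act (\<tau> 5) (S 5)) (S 5)" "heq (act (\<tau> 5) (S 4)) (S 6)"
    using I[OF m(5)] unfolding nv .
  have I6: "is_or_isom (\<tau> 6)" "heq (act (\<tau> 6) (S 6)) (S 6)" "heq (act (\<tau> 6) (S 5)) (S 1)"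
    using I[OF m(6)] unfolding nv .
  have c1: "compo \<tau> 1 = \<tau> 1" by simp
  have c2: "compo \<tau> 2 = \<tau> 2 ** compo \<tau> 1" by (simp add: eval_nat_numeral)
  have c3: "compo \<tau> 3 = \<tau> 3 ** compo \<tau> 2" by (simp add: eval_nat_numeral)
  have c4: "compo \<tau> 4 = \<tau> 4 ** compo \<tau> 3" by (simp add: eval_nat_numeral)
  have c5: "compo \<tau> 5 = \<tau> 5 ** compo \<tau> 4" by (simp add: eval_nat_numeral)
  have c6: "compo \<tau> 6 = \<tau> 6 ** compo \<tau> 5" by (simp add: eval_nat_numeral)
  have isoc: "is_or_isom (compo \<tau> n)" if "n \<le> 6" for n
    using compo_isom[of n \<tau>] I(1) that by auto
  have a1: "heq (act (compo \<tau> 1) (S 6)) (S 2)" "heq (act (compo \<tau> 1) (S 1)) (S 1)"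
    using I1 by (simp_all add: c1)
  have a2: "heq (act (compo \<tau> 2) (S 6)) (S 2)" "heq (act (compo \<tau> 2) (S 1)) (S 3)"
    unfolding c2 using heq_comp[OF I2(1)] a1 I2 by blast+
  have a3: "heq (act (compo \<tau> 3) (S 6)) (S 4)" "heq (act (compo \<tau> 3) (S 1)) (S 3)"
    unfolding c3 using heq_comp[OF I3(1)] a2 I3 by blast+
  have a4: "heq (act (compo \<tau> 4) (S 6)) (S 4)" "heq (act (compo \<tau> 4) (S 1)) (S 5)"
    unfolding c4 using heq_comp[OF I4(1)] a3 I4 by blast+
  have a5: "heq (act (compo \<tau> 5) (S 6)) (S 6)" "heq (act (compo \<tau> 5) (S 1)) (S 5)"
    unfolding c5 using heq_comp[OF I5(1)] a4 I5 by blast+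
  have a6: "heq (act (compo \<tau> 6) (S 6)) (S 6)" "heq (act (compo \<tau> 6) (S 1)) (S 1)"
    unfolding c6 using heq_comp[OF I6(1)] a5 I6 by blast+
  have hw: "\<forall>n\<in>{1..6}. wf_hobj (S n)" and ho: "\<forall>n\<in>{1..6}. orth (S n) (S (nxt n))"
    using hex unfolding oriented_aug_hexagon_def by blast+
  have wf: "wf_hobj (S 6)" "wf_hobj (S 1)" using hw m by blast+
  have o61: "orth (S 6) (S 1)" using ho[rule_format, OF m(6)] unfolding nv .
  have C6: "compo \<tau> 6 = mat 1" by (rule unique_obj[OF isoc wf o61 a6]) simp
  have P1: "\<tau> 6 ** \<tau> 5 ** \<tau> 4 ** \<tau> 3 ** \<tau> 2 ** \<tau> 1 = mat 1"
    using C6 unfolding c6 c5 c4 c3 c2 c1 by (simp add: matrix_mul_assoc)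
  have inv: "invertible (compo \<tau> n)" if "n \<le> 6" for n using isom_invertible[OF isoc[OF that]] .
  have eta_eq: "eta \<tau> n = matrix_inv (compo \<tau> (n-1)) ** \<tau> n ** compo \<tau> (n-1)" if "1 \<le> n" "n \<le> 6" for n
    unfolding eta_def iota_def using inv_inv[OF inv[of "n-1"]] that by simp
  have st: "compo \<tau> (n-1) ** eta \<tau> n = compo \<tau> n" if "1 \<le> n" "n \<le> 6" for n
  proof -
    have "compo \<tau> (n-1) ** eta \<tau> n = \<tau> n ** compo \<tau> (n-1)"
      unfolding eta_eq[OF that] using conj_step[OF inv[of "n-1"]] that by simp
    also have "\<dots> = compo \<tau> n" using that by (cases n) auto
    finally show ?thesis .
  qed
  have e1: "eta \<tau> 1 = compo \<tau> 1" using st[of 1] by simp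
  have "eta \<tau> 1 ** eta \<tau> 2 = compo \<tau> 2" using e1 st[of 2] by simp
  then have "eta \<tau> 1 ** eta \<tau> 2 ** eta \<tau> 3 = compo \<tau> 3" using st[of 3] by simp
  then have "eta \<tau> 1 ** eta \<tau> 2 ** eta \<tau> 3 ** eta \<tau> 4 = compo \<tau> 4" using st[of 4] by simp
  then have "eta \<tau> 1 ** eta \<tau> 2 ** eta \<tau> 3 ** eta \<tau> 4 ** eta \<tau> 5 = compo \<tau> 5" using st[of 5] by simp
  then have P2: "eta \<tau> 1 ** eta \<tau> 2 ** eta \<tau> 3 ** eta \<tau> 4 ** eta \<tau> 5 ** eta \<tau> 6 = mat 1"
    using st[of 6] C6 by simp
  have hi: "heq (act (iota \<tau> n) Y) X" if "n \<le> 6" "heq (act (compo \<tau> n) X) Y" for n X Y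
    unfolding iota_def using heq_inv[OF isoc[OF that(1)] that(2)] .
  have m6: "(1::nat) \<le> 6" "(2::nat) \<le> 6" "(3::nat) \<le> 6" "(4::nat) \<le> 6" "(5::nat) \<le> 6" "(6::nat) \<le> 6"
    by simp_all
  have b: "heq (act (iota \<tau> 1) (S 1)) (S 1)" "heq (act (iota \<tau> 1) (S 2)) (S 6)"
    "heq (act (iota \<tau> 3) (S 3)) (S 1)" "heq (act (iota \<tau> 3) (S 4)) (S 6)"
    "heq (act (iota \<tau> 5) (S 5)) (S 1)" "heq (act (iota \<tau> 5) (S 6)) (S 6)"
    "heq (act (iota \<tau> 2) (S 2)) (S 6)" "heq (act (iota \<tau> 2) (S 3)) (S 1)"
    "heq (act (iota \<tau> 4) (S 4)) (S 6)" "heq (act (iota \<tau> 4) (S 5)) (S 1)"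
    "heq (act (iota \<tau> 6) (S 6)) (S 6)" "heq (act (iota \<tau> 6) (S 1)) (S 1)"
    using hi[OF m6(1) a1(2)] hi[OF m6(1) a1(1)] hi[OF m6(3) a3(2)] hi[OF m6(3) a3(1)]
      hi[OF m6(5) a5(2)] hi[OF m6(5) a5(1)] hi[OF m6(2) a2(1)] hi[OF m6(2) a2(2)]
      hi[OF m6(4) a4(1)] hi[OF m6(4) a4(2)] hi[OF m6(6) a6(1)] hi[OF m6(6) a6(2)] by blast+
  have P3: "\<forall>n\<in>{1,3,5}. heq (act (iota \<tau> n) (S n)) (S 1) \<and> heq (act (iota \<tau> n) (S (nxt n))) (S 6)"
  proof (intro ballI)
    fix n :: nat assume "n \<in> {1,3,5}"
    then have "n = 1 \<or> n = 3 \<or> n = 5" by blast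
    then show "heq (act (iota \<tau> n) (S n)) (S 1) \<and> heq (act (iota \<tau> n) (S (nxt n))) (S 6)"
    proof (elim disjE)
      assume "n = 1" then show ?thesis unfolding \<open>n = 1\<close> nv using b by blast
    next
      assume "n = 3" then show ?thesis unfolding \<open>n = 3\<close> nv using b by blast
    next
      assume "n = 5" then show ?thesis unfolding \<open>n = 5\<close> nv using b by blast
    qed
  qed
  have P4: "\<forall>n\<in>{2,4,6}. heq (act (iota \<tau> n) (S n)) (S 6) \<and> heq (act (iota \<tau> n) (S (nxt n))) (S 1)"
  proof (intro ballI)
    fix n :: nat assume "n \<in> {2,4,6}"
    then have "n = 2 \<or> n = 4 \<or> n = 6" by blast
    then show "heq (act (iota \<tau> n) (S n)) (S 6) \<and> heq (act (iota \<tau> n) (S (nxt n))) (S 1)"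
    proof (elim disjE)
      assume "n = 2" then show ?thesis unfolding \<open>n = 2\<close> nv using b by blast
    next
      assume "n = 4" then show ?thesis unfolding \<open>n = 4\<close> nv using b by blast
    next
      assume "n = 6" then show ?thesis unfolding \<open>n = 6\<close> nv using b by blast
    qed
  qed
  show ?thesis using P1 P2 P3 P4 by blast
qed


end
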